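(* Consider a finite two-player zero-sum Markov game $(S,A,B,p,r,\alpha)$ with discount factor $\alpha\in[0,1)$ and $R_{\max}=\max_{i,a,b}|r(i,a,b)|$. Let $(\theta_n)_{n\ge 0}$ be a real sequence with $0\le\theta_n\le 1$ and $\theta_n$ decreasing monotonically to $0$, and let step sizes $\beta_n(i,a,b)\in[0,1]$ be given, with $\bar\beta_n:=\max_{(i,a,b)}\beta_n(i,a,b)$ satisfying $\sum_{n}\bar\beta_n\theta_n<\infty$. Let $(Q_n)$ be generated by the two-step minimax Q-learning (TMQL) iteration described in the context, with $\|Q_0\|\le \frac{R_{\max}}{1-\alpha}$. Then for every $n\in\mathbb{N}$, $$\|Q_n\|\le \frac{R_{\max}}{1-\alpha}(1+\alpha\theta_0)\prod_{m=1}^{n-1}(1+\bar\beta_m\theta_m\alpha^2)\le M,\qquad M:=\frac{R_{\max}}{1-\alpha}(1+\alpha\theta_0)\prod_{m=1}^{\infty}(1+\bar\beta_m\theta_m\alpha^2)<\infty.$$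
   Context: A two-player zero-sum Markov game is $(S,A,B,p,r,\alpha)$ with finite state set $S$, finite action sets $A$ (player 1) and $B$ (player 2), transition probabilities $p(j\mid i,a,b)$, deterministic reward $r(i,a,b)\in\mathbb{R}$ to player 1 (player 2 receives $-r$), and discount $\alpha\in[0,1)$. Norms are max-norms: $\|z\|=\max_k|z(k)|$. For $Q\in\mathbb{R}^{S\times A\times B}$ and $i\in S$, $Q(i)$ denotes the $|A|\times|B|$ matrix $(Q(i,a,b))_{a,b}$, and for an $|A|\times|B|$ matrix $M$, $\mathrm{val}[M]:=\min_{y\in\Delta^{|B|}}\max_{x\in\Delta^{|A|}}x^{T}My$, where $\Delta^{m}$ is the probability simplex in $\mathbb{R}^m$. TMQL iteration: at each step $n$, a sample $(i,a,b,j,c,d,k)$ is generated, where $j\sim p(\cdot\mid i,a,b)$, actions $c\in A,d\in B$ are chosen at $j$, and $k\sim p(\cdot\mid j,c,d)$; then $Q_{n+1}(i,a,b)=(1-\beta_n(i,a,b))Q_n(i,a,b)+\beta_n(i,a,b)\big(r(i,a,b)+\alpha\,\mathrm{val}[Q_n(j)]+\alpha\theta_n(r(j,c,d)+\alpha\,\mathrm{val}[Q_n(k)])\big)$, and all other components are left unchanged ($Q_{n+1}(i',a',b')=Q_n(i',a',b')$ for $(i',a',b')\neq(i,a,b)$). *)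

theory Defs
  imports "HOL-Analysis.Analysis"
begin

definition strategies :: "('x::finite \<Rightarrow> real) set" where
  "strategies = {x. (\<forall>k. 0 \<le> x k) \<and> (\<Sum>k\<in>UNIV. x k) = 1}"

definition val :: "('a::finite \<Rightarrow> 'b::finite \<Rightarrow> real) \<Rightarrow> real" where
  "val M = (INF y\<in>strategies. SUP x\<in>strategies. \<Sum>a\<in>UNIV. \<Sum>b\<in>UNIV. x a * M a b * y b)"

definition qnorm :: "('s::finite \<Rightarrow> 'a::finite \<Rightarrow> 'b::finite \<Rightarrow> real) \<Rightarrow> real" where
  "qnorm Q = Max {\<bar>Q i a b\<bar> | i a b. True}"

definition Rmax :: "('s::finite \<Rightarrow> 'a::finite \<Rightarrow> 'b::finite \<Rightarrow> real) \<Rightarrow> real" where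
  "Rmax r = Max {\<bar>r i a b\<bar> | i a b. True}"

definition betabar :: "(nat \<Rightarrow> 's::finite \<Rightarrow> 'a::finite \<Rightarrow> 'b::finite \<Rightarrow> real) \<Rightarrow> nat \<Rightarrow> real" where
  "betabar \<beta> n = Max {\<beta> n i a b | i a b. True}"

definition tmql_step ::
  "('s::finite \<Rightarrow> 'a::finite \<Rightarrow> 'b::finite \<Rightarrow> real) \<Rightarrow> real \<Rightarrow>
   ('s \<Rightarrow> 'a \<Rightarrow> 'b \<Rightarrow> real) \<Rightarrow> ('s \<Rightarrow> 'a \<Rightarrow> 'b \<Rightarrow> real) \<Rightarrow> real \<Rightarrow>
   ('s \<times> 'a \<times> 'b \<times> 's \<times> 'a \<times> 'b \<times> 's) \<Rightarrow> ('s \<Rightarrow> 'a \<Rightarrow> 'b \<Rightarrow> real)" where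
  "tmql_step r \<alpha> \<beta> Q th smp =
     (case smp of (i, a, b, j, c, d, k) \<Rightarrow>
       (\<lambda>i' a' b'. if (i', a', b') = (i, a, b) then
          (1 - \<beta> i a b) * Q i a b
          + \<beta> i a b * (r i a b + \<alpha> * val (Q j)
                        + \<alpha> * th * (r j c d + \<alpha> * val (Q k)))
        else Q i' a' b'))"

end

theory Submission
  imports Defs
begin

lemma strategies_ne: "(\<lambda>_. 1 / real CARD('x::finite)) \<in> (strategies :: ('x \<Rightarrow> real) set)"
  unfolding strategies_def by simp

lemma bil_bound:
  fixes M :: "'a::finite \<Rightarrow> 'b::finite \<Rightarrow> real"
  assumes M: "\<And>a b. \<bar>M a b\<bar> \<le> X" and x: "x \<in> strategies" and y: "y \<in> strategies"
  shows "\<bar>\<Sum>a\<in>UNIV. \<Sum>b\<in>UNIV. x a * M a b * y b\<bar> \<le> X"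
proof -
  have x0: "\<And>a. 0 \<le> x a" and x1: "(\<Sum>a\<in>UNIV. x a) = 1" using x unfolding strategies_def by auto
  have y0: "\<And>b. 0 \<le> y b" and y1: "(\<Sum>b\<in>UNIV. y b) = 1" using y unfolding strategies_def by auto
  have "\<bar>\<Sum>a\<in>UNIV. \<Sum>b\<in>UNIV. x a * M a b * y b\<bar> \<le> (\<Sum>a\<in>UNIV. \<Sum>b\<in>UNIV. \<bar>x a * M a b * y b\<bar>)"
    by (rule order_trans[OF sum_abs sum_mono]) (rule sum_abs)
  also have "\<dots> \<le> (\<Sum>a\<in>UNIV. \<Sum>b\<in>UNIV. x a * X * y b)"
    by (intro sum_mono) (simp add: abs_mult x0 y0 mult_left_mono mult_right_mono M)
  also have "\<dots> = X"
    by (simp add: sum_distrib_left[symmetric] sum_distrib_right[symmetric] y1 x1 mult.commute)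
  finally show ?thesis .
qed

lemma val_bound:
  fixes M :: "'a::finite \<Rightarrow> 'b::finite \<Rightarrow> real"
  assumes M: "\<And>a b. \<bar>M a b\<bar> \<le> X"
  shows "\<bar>val M\<bar> \<le> X"
proof -
  define g where "g x y = (\<Sum>a\<in>UNIV. \<Sum>b\<in>UNIV. x a * M a b * y b)" for x y
  define f where "f y = (SUP x\<in>strategies. g x y)" for y
  have ne: "strategies \<noteq> {}" using strategies_ne by blast
  have ne2: "(strategies :: ('b \<Rightarrow> real) set) \<noteq> {}" using strategies_ne by blast
  have gb: "\<And>x y. x \<in> strategies \<Longrightarrow> y \<in> strategies \<Longrightarrow> \<bar>g x y\<bar> \<le> X"
    unfolding g_def by (rule bil_bound[where M=M, OF M])
  have fb: "\<bar>f y\<bar> \<le> X" if y: "y \<in> strategies" for y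
  proof -
    have bdd: "bdd_above ((\<lambda>x. g x y) ` strategies)"
      using gb[OF _ y] by (intro bdd_aboveI[where M=X]) (auto simp: abs_le_iff)
    have "f y \<le> X" unfolding f_def using gb[OF _ y] ne by (intro cSUP_least) (auto simp: abs_le_iff)
    moreover have "-X \<le> f y" unfolding f_def
      using gb[OF strategies_ne y] by (intro cSUP_upper2[OF bdd strategies_ne]) (auto simp: abs_le_iff)
    ultimately show ?thesis by auto
  qed
  have fb': "-X \<le> f y" if "y \<in> strategies" for y using fb[OF that] by linarith
  have bdd: "bdd_below (f ` strategies)"
    by (rule bdd_belowI2[where m="-X"]) (rule fb')
  have v: "val M = (INF y\<in>strategies. f y)" unfolding val_def f_def g_def ..
  have "val M \<le> X" unfolding v using fb[OF strategies_ne]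
    by (intro cINF_lower2[OF bdd strategies_ne]) (auto simp: abs_le_iff)
  moreover have "-X \<le> val M" unfolding v
    apply (intro cINF_greatest[OF ne2])
    subgoal for y using fb[of y] by (simp add: abs_le_iff)
    done
  ultimately show ?thesis by auto
qed

lemma qnorm_ge: "\<bar>Q i a b\<bar> \<le> qnorm (Q :: 's::finite \<Rightarrow> 'a::finite \<Rightarrow> 'b::finite \<Rightarrow> real)"
proof -
  have "{\<bar>Q i a b\<bar> | i a b. True} = (\<lambda>(i,a,b). \<bar>Q i a b\<bar>) ` UNIV" by (auto simp: image_def)
  hence fin: "finite {\<bar>Q i a b\<bar> | i a b. True}" by simp
  show ?thesis unfolding qnorm_def by (rule Max_ge[OF fin]) blast
qed

lemma qnorm_le: assumes "\<And>i a b. \<bar>Q i a b\<bar> \<le> X"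
  shows "qnorm (Q :: 's::finite \<Rightarrow> 'a::finite \<Rightarrow> 'b::finite \<Rightarrow> real) \<le> X"
proof -
  have "{\<bar>Q i a b\<bar> | i a b. True} = (\<lambda>(i,a,b). \<bar>Q i a b\<bar>) ` UNIV" by (auto simp: image_def)
  hence fin: "finite {\<bar>Q i a b\<bar> | i a b. True}" by simp
  show ?thesis unfolding qnorm_def using assms by (intro Max.boundedI[OF fin]) auto
qed

lemma Rmax_ge: "\<bar>r i a b\<bar> \<le> Rmax (r :: 's::finite \<Rightarrow> 'a::finite \<Rightarrow> 'b::finite \<Rightarrow> real)"
  using qnorm_ge unfolding qnorm_def Rmax_def .

lemma betabar_ge: "\<beta> n i a b \<le> betabar (\<beta> :: nat \<Rightarrow> 's::finite \<Rightarrow> 'a::finite \<Rightarrow> 'b::finite \<Rightarrow> real) n"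
proof -
  have "{\<beta> n i a b | i a b. True} = (\<lambda>(i,a,b). \<beta> n i a b) ` UNIV" by (auto simp: image_def)
  hence fin: "finite {\<beta> n i a b | i a b. True}" by simp
  show ?thesis unfolding betabar_def by (rule Max_ge[OF fin]) blast
qed

lemma step_bound:
  fixes Q :: "'s::finite \<Rightarrow> 'a::finite \<Rightarrow> 'b::finite \<Rightarrow> real"
  assumes X: "qnorm Q \<le> X" and b: "\<And>i a b. 0 \<le> \<beta> i a b \<and> \<beta> i a b \<le> 1"
    and al: "0 \<le> \<alpha>" and th: "0 \<le> th" and XY: "X \<le> Y"
    and BY: "\<And>i a b. (1 - \<beta> i a b) * X + \<beta> i a b * (Rmax r + \<alpha> * X + \<alpha> * th * (Rmax r + \<alpha> * X)) \<le> Y"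
  shows "qnorm (tmql_step r \<alpha> \<beta> Q th smp) \<le> Y"
proof -
  obtain i a b j c d k where smp: "smp = (i, a, b, j, c, d, k)" by (cases smp) auto
  let ?R = "Rmax r"
  have QX: "\<And>i a b. \<bar>Q i a b\<bar> \<le> X" using qnorm_ge X order_trans by blast
  have vj: "\<bar>val (Q j)\<bar> \<le> X" by (rule val_bound) (rule QX)
  have vk: "\<bar>val (Q k)\<bar> \<le> X" by (rule val_bound) (rule QX)
  have rr: "\<bar>r i a b\<bar> \<le> ?R" "\<bar>r j c d\<bar> \<le> ?R" by (rule Rmax_ge)+
  have b0: "0 \<le> \<beta> i a b" "\<beta> i a b \<le> 1" using b by auto
  have "\<bar>\<alpha> * val (Q k)\<bar> \<le> \<alpha> * X" using mult_left_mono[OF vk al] al by (simp add: abs_mult)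
  hence c2: "\<bar>r j c d + \<alpha> * val (Q k)\<bar> \<le> ?R + \<alpha> * X"
    using rr(2) abs_triangle_ineq[of "r j c d" "\<alpha> * val (Q k)"] by linarith
  have c1: "\<bar>r i a b + \<alpha> * val (Q j) + \<alpha> * th * (r j c d + \<alpha> * val (Q k))\<bar>
      \<le> ?R + \<alpha> * X + \<alpha> * th * (?R + \<alpha> * X)"
  proof -
    have "\<bar>\<alpha> * th * (r j c d + \<alpha> * val (Q k))\<bar> \<le> \<alpha> * th * (?R + \<alpha> * X)"
      using mult_left_mono[OF c2, of "\<alpha> * th"] al th by (simp add: abs_mult)
    moreover have "\<bar>\<alpha> * val (Q j)\<bar> \<le> \<alpha> * X" using mult_left_mono[OF vj al] al by (simp add: abs_mult)
    ultimately show ?thesis using rr(1) abs_triangle_ineq[of "r i a b + \<alpha> * val (Q j)" "\<alpha> * th * (r j c d + \<alpha> * val (Q k))"]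
       abs_triangle_ineq[of "r i a b" "\<alpha> * val (Q j)"] by linarith
  qed
  have upd: "\<bar>(1 - \<beta> i a b) * Q i a b + \<beta> i a b * (r i a b + \<alpha> * val (Q j)
                        + \<alpha> * th * (r j c d + \<alpha> * val (Q k)))\<bar> \<le> Y"
  proof -
    have "\<bar>(1 - \<beta> i a b) * Q i a b\<bar> \<le> (1 - \<beta> i a b) * X"
      using mult_left_mono[OF QX[of i a b], of "1 - \<beta> i a b"] b0 by (simp add: abs_mult)
    moreover have "\<bar>\<beta> i a b * (r i a b + \<alpha> * val (Q j) + \<alpha> * th * (r j c d + \<alpha> * val (Q k)))\<bar>
       \<le> \<beta> i a b * (?R + \<alpha> * X + \<alpha> * th * (?R + \<alpha> * X))"
      using mult_left_mono[OF c1 b0(1)] b0 by (simp add: abs_mult)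
    ultimately show ?thesis using BY[of i a b] abs_triangle_ineq[of "(1 - \<beta> i a b) * Q i a b" "\<beta> i a b * (r i a b + \<alpha> * val (Q j) + \<alpha> * th * (r j c d + \<alpha> * val (Q k)))"] by linarith
  qed
  show ?thesis
    by (rule qnorm_le) (auto simp: tmql_step_def smp upd intro: order_trans[OF QX XY])
qed

lemma arith1:
  fixes K R al th b bb :: real
  assumes K0: "0 \<le> K" and key: "R * (1 + al * th) \<le> K * (1 - al)"
    and b: "0 \<le> b" "b \<le> bb" and tn: "0 \<le> th" and al: "0 \<le> al"
  shows "(1 - b) * K + b * (R + al * K + al * th * (R + al * K)) \<le> K * (1 + bb * th * al^2)"
proof -
  have e: "(1 - b) * K + b * (R + al * K + al * th * (R + al * K))
       = K + b * (R * (1 + al * th) - K * (1 - al)) + b * (th * al^2 * K)"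
    by (simp add: algebra_simps power2_eq_square)
  have 1: "b * (R * (1 + al * th) - K * (1 - al)) \<le> 0"
    using b key by (simp add: mult_nonneg_nonpos)
  have 2: "b * (th * al^2 * K) \<le> bb * (th * al^2 * K)"
    using b tn K0 by (intro mult_right_mono) auto
  show ?thesis unfolding e using 1 2 by (simp add: algebra_simps)
qed
lemma arith0:
  fixes C R al th b :: real
  assumes C0: "0 \<le> C" and RC: "R = C * (1 - al)"
    and b: "0 \<le> b" "b \<le> 1" and tn: "0 \<le> th" and al: "0 \<le> al"
  shows "(1 - b) * C + b * (R + al * C + al * th * (R + al * C)) \<le> C * (1 + al * th)"
proof -
  have e: "(1 - b) * C + b * (R + al * C + al * th * (R + al * C)) = C + b * (al * th * C)"
    unfolding RC by (simp add: algebra_simps)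
  have "b * (al * th * C) \<le> 1 * (al * th * C)" using b tn al C0 by (intro mult_right_mono) auto
  then show ?thesis unfolding e by (simp add: algebra_simps)
qed

theorem mainTheorem1:
  fixes p :: "'s::finite \<Rightarrow> 'a::finite \<Rightarrow> 'b::finite \<Rightarrow> 's \<Rightarrow> real"
    and r :: "'s \<Rightarrow> 'a \<Rightarrow> 'b \<Rightarrow> real"
    and \<alpha> :: real
    and \<theta> :: "nat \<Rightarrow> real"
    and \<beta> :: "nat \<Rightarrow> 's \<Rightarrow> 'a \<Rightarrow> 'b \<Rightarrow> real"
    and smp :: "nat \<Rightarrow> 's \<times> 'a \<times> 'b \<times> 's \<times> 'a \<times> 'b \<times> 's"
    and Q :: "nat \<Rightarrow> 's \<Rightarrow> 'a \<Rightarrow> 'b \<Rightarrow> real"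
  assumes p_nonneg: "\<And>i a b j. 0 \<le> p i a b j"
    and p_sum: "\<And>i a b. (\<Sum>j\<in>UNIV. p i a b j) = 1"
    and alpha: "0 \<le> \<alpha>" "\<alpha> < 1"
    and theta_bounds: "\<And>n. 0 \<le> \<theta> n \<and> \<theta> n \<le> 1"
    and theta_mono: "decseq \<theta>"
    and theta_lim: "\<theta> \<longlonglongrightarrow> 0"
    and beta_bounds: "\<And>n i a b. 0 \<le> \<beta> n i a b \<and> \<beta> n i a b \<le> 1"
    and summable: "summable (\<lambda>n. betabar \<beta> n * \<theta> n)"
    and sample_j: "\<And>n i a b j c d k. smp n = (i, a, b, j, c, d, k) \<Longrightarrow> 0 < p i a b j"
    and sample_k: "\<And>n i a b j c d k. smp n = (i, a, b, j, c, d, k) \<Longrightarrow> 0 < p j c d k"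
    and Q0: "qnorm (Q 0) \<le> Rmax r / (1 - \<alpha>)"
    and Qstep: "\<And>n. Q (Suc n) = tmql_step r \<alpha> (\<beta> n) (Q n) (\<theta> n) (smp n)"
  shows "convergent_prod (\<lambda>m. 1 + betabar \<beta> (Suc m) * \<theta> (Suc m) * \<alpha>^2)
    \<and> (\<forall>n. qnorm (Q n)
           \<le> Rmax r / (1 - \<alpha>) * (1 + \<alpha> * \<theta> 0)
               * (\<Prod>m\<in>{1..<n}. 1 + betabar \<beta> m * \<theta> m * \<alpha>^2)
         \<and> Rmax r / (1 - \<alpha>) * (1 + \<alpha> * \<theta> 0)
               * (\<Prod>m\<in>{1..<n}. 1 + betabar \<beta> m * \<theta> m * \<alpha>^2)
           \<le> Rmax r / (1 - \<alpha>) * (1 + \<alpha> * \<theta> 0)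
               * (\<Prod>m. 1 + betabar \<beta> (Suc m) * \<theta> (Suc m) * \<alpha>^2))"
proof -
  let ?C = "Rmax r / (1 - \<alpha>)"
  let ?R = "Rmax r"
  define g where "g m = 1 + betabar \<beta> m * \<theta> m * \<alpha>^2" for m
  define K where "K n = ?C * (1 + \<alpha> * \<theta> 0) * (\<Prod>m\<in>{1..<n}. g m)" for n
  have R0: "0 \<le> ?R" using Rmax_ge[of r undefined undefined undefined] by linarith
  have C0: "0 \<le> ?C" using R0 alpha by simp
  have RC: "?R = ?C * (1 - \<alpha>)" using alpha by simp
  have th0: "\<And>n. \<theta> n \<le> \<theta> 0" using theta_mono unfolding decseq_def by auto
  have bb0: "\<And>n. 0 \<le> betabar \<beta> n"
    using betabar_ge[of \<beta> _ undefined undefined undefined] beta_bounds by (meson order_trans)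
  have g1: "\<And>m. 1 \<le> g m" unfolding g_def using bb0 theta_bounds by simp
  have P1: "\<And>n. 1 \<le> (\<Prod>m\<in>{1..<n}. g m)" using g1 by (simp add: prod_ge_1)
  have CC: "0 \<le> ?C * (1 + \<alpha> * \<theta> 0)" using C0 alpha theta_bounds[of 0] by (intro mult_nonneg_nonneg) auto
  have KC: "?C * (1 + \<alpha> * \<theta> 0) \<le> K n" for n
    using mult_left_mono[OF P1[of n] CC] unfolding K_def by simp
  have CC1: "?C * 1 \<le> ?C * (1 + \<alpha> * \<theta> 0)" using C0 alpha theta_bounds[of 0]
      by (intro mult_left_mono) auto
  have bd: "qnorm (Q n) \<le> K n" for n
  proof (induction n)
    case 0
    show ?case using Q0 KC[of 0] CC1 by linarith
  next
    case (Suc n)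
    have tn: "0 \<le> \<theta> n" "\<theta> n \<le> 1" using theta_bounds by auto
    show ?case
    proof (cases n)
      case 0
      have K1: "K (Suc n) = ?C * (1 + \<alpha> * \<theta> 0)" unfolding K_def 0 by simp
      have Qn: "qnorm (Q n) \<le> ?C" using Q0 0 by simp
      show ?thesis unfolding Qstep K1
      proof (rule step_bound[OF Qn beta_bounds[of n] alpha(1) tn(1)])
        show "?C \<le> ?C * (1 + \<alpha> * \<theta> 0)" using CC1 by simp
        fix i a b
        have b: "0 \<le> \<beta> n i a b" "\<beta> n i a b \<le> 1" using beta_bounds by auto
        show "(1 - \<beta> n i a b) * ?C + \<beta> n i a b * (?R + \<alpha> * ?C + \<alpha> * \<theta> n * (?R + \<alpha> * ?C))
           \<le> ?C * (1 + \<alpha> * \<theta> 0)"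
          using arith0[OF C0 RC b tn(1) alpha(1)] by (simp add: 0)
      qed
    next
      case (Suc m)
      have KS: "K (Suc n) = K n * g n" unfolding K_def Suc
        by (simp add: prod.atLeastLessThan_Suc)
      let ?K = "K n"
      have K0: "0 \<le> ?K" using KC[of n] CC by linarith
      show ?thesis unfolding Qstep KS
      proof (rule step_bound[OF Suc.IH beta_bounds[of n] alpha(1) tn(1)])
        show "?K \<le> ?K * g n" using K0 g1[of n] by (simp add: mult_le_cancel_left1)
        fix i a b
        let ?b = "\<beta> n i a b"
        have b: "0 \<le> ?b" "?b \<le> betabar \<beta> n" using beta_bounds betabar_ge by auto
        have key: "?R * (1 + \<alpha> * \<theta> n) \<le> ?K * (1 - \<alpha>)"
        proof -
          have "?R * (1 + \<alpha> * \<theta> n) \<le> ?R * (1 + \<alpha> * \<theta> 0)"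
            using R0 alpha th0[of n] by (intro mult_left_mono) (auto intro: mult_left_mono)
          also have "\<dots> = ?C * (1 + \<alpha> * \<theta> 0) * (1 - \<alpha>)" using RC alpha by simp
          also have "\<dots> \<le> ?K * (1 - \<alpha>)" using KC[of n] alpha by (intro mult_right_mono) auto
          finally show ?thesis .
        qed
        show "(1 - ?b) * ?K + ?b * (?R + \<alpha> * ?K + \<alpha> * \<theta> n * (?R + \<alpha> * ?K)) \<le> ?K * g n"
          unfolding g_def using arith1[OF K0 key b tn(1) alpha(1)] .
      qed
    qed
  qed
  have sumg: "summable (\<lambda>m. norm (g (Suc m) - 1))"
  proof -
    have s0: "summable (\<lambda>n. betabar \<beta> n * \<theta> n * \<alpha>^2)" by (rule summable_mult2[OF summable])
    have "summable (\<lambda>m. betabar \<beta> (Suc m) * \<theta> (Suc m) * \<alpha>^2)"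
      using s0 summable_Suc_iff[of "\<lambda>n. betabar \<beta> n * \<theta> n * \<alpha>^2"] by simp
    moreover have "norm (g (Suc m) - 1) = betabar \<beta> (Suc m) * \<theta> (Suc m) * \<alpha>^2" for m
      unfolding g_def using bb0 theta_bounds by simp
    ultimately show ?thesis by simp
  qed
  have cp: "convergent_prod (\<lambda>m. g (Suc m))"
    by (rule abs_convergent_prod_imp_convergent_prod[OF summable_imp_abs_convergent_prod[OF sumg]])
  have le: "(\<Prod>m\<in>{1..<n}. g m) \<le> (\<Prod>m. g (Suc m))" for n
  proof -
    have "(\<Prod>m\<in>{1..<n}. g m) = (\<Prod>m\<in>{..<n-1}. g (Suc m))"
    proof (cases n)
      case 0 then show ?thesis by simp
    next
      case (Suc k)
      then show ?thesis using prod.shift_bounds_Suc_ivl[of g 0 k] by (simp add: atLeast0LessThan)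
    qed
    also have "\<dots> \<le> (\<Prod>m. g (Suc m))"
      using cp g1 by (intro prod_le_prodinf) (auto simp: convergent_prod_has_prod_iff intro: order_trans[OF zero_le_one])
    finally show ?thesis .
  qed
  show ?thesis
    using cp bd le mult_left_mono[OF le CC] unfolding g_def K_def by auto
qed

end
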